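(* For every integer $n\ge 1$, $R_n(x)=L_{2n,n}(x)$.
   Context: An even tree is a rooted plane (ordered) tree in which every vertex has an even number of children. If a vertex has $2k$ children, its first $k$ children (in the plane order) are called left children and its last $k$ children are called right children. The degree of a vertex means its number of children. The $r$-index $r(T)$ of an even tree $T$ is half of the sum of the degrees of all vertices of $T$ that are right children. Let $R_{n,k}$ be the number of even trees with $2n$ edges and $r$-index $k$, and $R_n(x)=\sum_{k=0}^{n-1}R_{n,k}x^k$. Lattice polynomials: for integers $i,j\ge 0$, consider lattice paths from $(0,0)$ to $(i,j)$ consisting of unit east steps $(1,0)$ and unit north steps $(0,1)$ such that no step goes above the line $x=2y$ (every lattice point $(a,b)$ visited satisfies $a\ge 2b$). A north step from $(k,\ell)$ to $(k,\ell+1)$ receives weight $x$ if $k$ is odd; all other steps receive weight $1$. The weight of a path is the product of its step weights, and $L_{i,j}(x)$ is the sum of the weights of all such paths. *)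

theory Defs
  imports "HOL-Computational_Algebra.Polynomial"
begin

datatype ptree = Node "ptree list"

fun children :: "ptree \<Rightarrow> ptree list" where
  "children (Node ts) = ts"

definition degree_pt :: "ptree \<Rightarrow> nat" where
  "degree_pt t = length (children t)"

fun num_nodes :: "ptree \<Rightarrow> nat" where
  "num_nodes (Node ts) = 1 + sum_list (map num_nodes ts)"

definition num_edges :: "ptree \<Rightarrow> nat" where
  "num_edges t = num_nodes t - 1"

fun even_tree :: "ptree \<Rightarrow> bool" where
  "even_tree (Node ts) = (even (length ts) \<and> (\<forall>t\<in>set ts. even_tree t))"

text \<open>Sum of the degrees of all vertices of the tree that are right children
  (the root is nobody's child). A vertex with \<open>2k\<close> children has its last \<open>k\<close>
  children as right children.\<close>
fun right_deg_sum :: "ptree \<Rightarrow> nat" where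
  "right_deg_sum (Node ts) =
     sum_list (map right_deg_sum ts)
     + sum_list (map degree_pt (drop (length ts div 2) ts))"

definition r_index :: "ptree \<Rightarrow> nat" where
  "r_index t = right_deg_sum t div 2"

definition R_count :: "nat \<Rightarrow> nat \<Rightarrow> nat" where
  "R_count n k = card {t. even_tree t \<and> num_edges t = 2 * n \<and> r_index t = k}"

definition R_poly :: "nat \<Rightarrow> int poly" where
  "R_poly n = (\<Sum>k<n. monom (int (R_count n k)) k)"

text \<open>Lattice paths: a list of steps, True = north step (0,1), False = east step (1,0).\<close>
fun visited :: "nat \<times> nat \<Rightarrow> bool list \<Rightarrow> (nat \<times> nat) list" where
  "visited p [] = [p]"
| "visited (a, b) (s # ss) =
     (a, b) # visited (if s then (a, Suc b) else (Suc a, b)) ss"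

fun odd_north :: "nat \<times> nat \<Rightarrow> bool list \<Rightarrow> nat" where
  "odd_north p [] = 0"
| "odd_north (a, b) (s # ss) =
     (if s \<and> odd a then 1 else 0)
     + odd_north (if s then (a, Suc b) else (Suc a, b)) ss"

definition lattice_paths :: "nat \<Rightarrow> nat \<Rightarrow> bool list set" where
  "lattice_paths i j = {ss. count_list ss False = i \<and> count_list ss True = j \<and>
      (\<forall>(a, b) \<in> set (visited (0, 0) ss). 2 * b \<le> a)}"

definition L_poly :: "nat \<Rightarrow> nat \<Rightarrow> int poly" where
  "L_poly i j = (\<Sum>ss\<in>lattice_paths i j. monom 1 (odd_north (0, 0) ss))"

end

theory Submission
  imports Defs "HOL-Computational_Algebra.Formal_Power_Series"
begin


fun pos :: "int \<Rightarrow> bool list \<Rightarrow> bool" where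
  "pos s [] = (0 \<le> s)"
| "pos s (b # ss) = (0 \<le> s \<and> pos (if b then s - 2 else s + 1) ss)"

fun wt :: "bool \<Rightarrow> bool list \<Rightarrow> nat" where
  "wt e [] = 0"
| "wt e (b # ss) = (if b then (if e then 1 else 0) + wt e ss else wt (\<not> e) ss)"

definition dd :: "bool list \<Rightarrow> int" where
  "dd ss = int (count_list ss False) - 2 * int (count_list ss True)"

lemma dd_simps[simp]: "dd [] = 0" "dd (True # ss) = dd ss - 2" "dd (False # ss) = dd ss + 1"
  "dd (v @ w) = dd v + dd w"
  by (auto simp: dd_def)

lemma pos_nonneg: "pos s ss \<Longrightarrow> 0 \<le> s"
  by (cases ss) auto

lemma pos_append: "pos s (v @ w) = (pos s v \<and> pos (s + dd v) w)"
proof (induction v arbitrary: s)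
  case Nil
  then show ?case using pos_nonneg by auto
next
  case (Cons b v)
  then show ?case by (auto simp: algebra_simps)
qed

lemma pos_mono: "pos s ss \<Longrightarrow> s \<le> t \<Longrightarrow> pos t ss"
proof (induction ss arbitrary: s t)
  case (Cons b ss)
  then have "pos (if b then s - 2 else s + 1) ss" "0 \<le> s" by auto
  moreover have "(if b then s - 2 else s + 1) \<le> (if b then t - 2 else t + 1)" using Cons.prems by auto
  ultimately show ?case using Cons.IH Cons.prems by auto
qed auto

lemma pos_end: "pos s ss \<Longrightarrow> 0 \<le> s + dd ss"
  using pos_append[of s ss "[]"] by simp

lemma wt_append: "wt e (v @ w) = wt e v + wt (if even (count_list v False) then e else \<not> e) w"
  by (induction v arbitrary: e) auto

lemma len_count: "length ss = count_list ss True + count_list ss False"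
  by (induction ss) auto

lemma split_first:
  assumes "0 \<le> s" "pos (s + 1) r"
  shows "pos s r \<or> (\<exists>v w. r = v @ True # w \<and> pos s v \<and> s + dd v = 1 \<and> pos 0 w)"
  using assms
proof (induction r arbitrary: s)
  case Nil
  then show ?case by auto
next
  case (Cons b r)
  show ?case
  proof (cases b)
    case False
    with Cons have "pos (s + 1 + 1) r" by (simp add: algebra_simps)
    from Cons.IH[of "s+1"] this Cons.prems(1) have
      "pos (s + 1) r \<or> (\<exists>v w. r = v @ True # w \<and> pos (s+1) v \<and> s + 1 + dd v = 1 \<and> pos 0 w)"
      by simp
    then show ?thesis
    proof
      assume "pos (s + 1) r" then show ?thesis using False Cons.prems by simp
    next
      assume "\<exists>v w. r = v @ True # w \<and> pos (s+1) v \<and> s + 1 + dd v = 1 \<and> pos 0 w"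
      then obtain v w where "r = v @ True # w" "pos (s+1) v" "s + 1 + dd v = 1" "pos 0 w" by blast
      then show ?thesis using False Cons.prems
        by (intro disjI2 exI[of _ "False # v"] exI[of _ w]) (auto simp: algebra_simps)
    qed
  next
    case True
    with Cons have p: "pos (s - 1) r" by (simp add: algebra_simps)
    consider "s = 0" | "s = 1" | "s \<ge> 2" using Cons.prems(1) by linarith
    then show ?thesis
    proof cases
      case 1 then show ?thesis using p pos_nonneg by fastforce
    next
      case 2 then show ?thesis using p True
        by (intro disjI2 exI[of _ "[]"] exI[of _ r]) auto
    next
      case 3
      from Cons.IH[of "s-2"] p 3 have
        "pos (s - 2) r \<or> (\<exists>v w. r = v @ True # w \<and> pos (s-2) v \<and> s - 2 + dd v = 1 \<and> pos 0 w)"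
        by (simp add: algebra_simps)
      then show ?thesis
      proof
        assume "pos (s - 2) r" then show ?thesis using True 3 by simp
      next
        assume "\<exists>v w. r = v @ True # w \<and> pos (s-2) v \<and> s - 2 + dd v = 1 \<and> pos 0 w"
        then obtain v w where "r = v @ True # w" "pos (s-2) v" "s - 2 + dd v = 1" "pos 0 w" by blast
        then show ?thesis using True 3
          by (intro disjI2 exI[of _ "True # v"] exI[of _ w]) (auto simp: algebra_simps)
      qed
    qed
  qed
qed

lemma split_unique:
  assumes "v @ True # w = v' @ True # w'" "pos 0 v" "dd v = 1" "pos 0 v'" "dd v' = 1"
  shows "v = v' \<and> w = w'"
proof -
  have aux: False if "pos 0 (a @ True # u)" "dd a = 1" for a u
    using that by (auto simp: pos_append dest: pos_nonneg)
  from assms(1) obtain us where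
    "(v = v' @ us \<and> us @ True # w = True # w') \<or> (v @ us = v' \<and> True # w = us @ True # w')"
    by (auto simp: append_eq_append_conv2)
  then show ?thesis
  proof
    assume h: "v = v' @ us \<and> us @ True # w = True # w'"
    show ?thesis
    proof (cases us)
      case Nil then show ?thesis using h by simp
    next
      case (Cons u us')
      with h have "u = True" "v = v' @ True # us'" by auto
      then show ?thesis using aux assms by blast
    qed
  next
    assume h: "v @ us = v' \<and> True # w = us @ True # w'"
    show ?thesis
    proof (cases us)
      case Nil then show ?thesis using h by simp
    next
      case (Cons u us')
      with h have "u = True" "v' = v @ True # us'" by auto
      then show ?thesis using aux assms by blast
    qed
  qed
qed

lemma visited_pos:
  "(\<forall>(a, b) \<in> set (visited (a0, b0) ss). 2 * b \<le> a) = pos (int a0 - 2 * int b0) ss"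
proof (induction ss arbitrary: a0 b0)
  case Nil then show ?case by auto
next
  case (Cons s ss)
  show ?case
  proof (cases s)
    case True
    then show ?thesis using Cons.IH[of a0 "Suc b0"] by (auto simp: algebra_simps)
  next
    case False
    then show ?thesis using Cons.IH[of "Suc a0" b0] by (auto simp: algebra_simps)
  qed
qed

lemma odd_north_wt: "odd_north (a, b) ss = wt (odd a) ss"
  by (induction ss arbitrary: a b) auto



definition PF :: "nat \<Rightarrow> bool list set" where
  "PF n = {ss. count_list ss False = 2*n \<and> count_list ss True = n \<and> pos 0 ss}"
definition PG :: "nat \<Rightarrow> bool list set" where
  "PG n = {ss. count_list ss False = 2*n+1 \<and> count_list ss True = n \<and> pos 0 ss}"

definition LF :: "bool \<Rightarrow> nat \<Rightarrow> int poly" where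
  "LF e n = (\<Sum>ss\<in>PF n. monom 1 (wt e ss))"
definition LG :: "bool \<Rightarrow> nat \<Rightarrow> int poly" where
  "LG e n = (\<Sum>ss\<in>PG n. monom 1 (wt e ss))"

definition cc :: "bool \<Rightarrow> int poly" where
  "cc e = monom 1 (if e then 1 else 0)"

lemma finite_len: "finite {ss :: bool list. length ss = m}"
  using finite_lists_length_eq[of "UNIV :: bool set" m] by simp

lemma finite_PF: "finite (PF n)"
  by (rule finite_subset[OF _ finite_len[of "3*n"]]) (auto simp: PF_def len_count)
lemma finite_PG: "finite (PG n)"
  by (rule finite_subset[OF _ finite_len[of "3*n+1"]]) (auto simp: PG_def len_count)

lemma dd_PF: "ss \<in> PF n \<Longrightarrow> dd ss = 0" and dd_PG: "ss \<in> PG n \<Longrightarrow> dd ss = 1"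
  by (auto simp: PF_def PG_def dd_def)

lemma PG_sub: "v \<in> PG m \<Longrightarrow> pos 0 v \<and> dd v = 1"
  by (auto simp: PG_def dd_def)

lemma PG_disj: "m \<noteq> m' \<Longrightarrow> PG m \<inter> PG m' = {}"
  by (auto simp: PG_def)

lemma PF_disj: "m \<noteq> m' \<Longrightarrow> PF m \<inter> PF m' = {}"
  by (auto simp: PF_def)

lemma disj_prod: "(\<And>i j. i \<noteq> j \<Longrightarrow> A i \<inter> A j = {}) \<Longrightarrow> \<forall>i\<in>I. \<forall>j\<in>I. i \<noteq> j \<longrightarrow> A i \<times> B i \<inter> A j \<times> B j = {}"
  by auto

definition mu :: "bool list \<times> bool list \<Rightarrow> bool list" where
  "mu p = False # fst p @ True # snd p"

lemma mu_inj: "inj_on mu {(v, w). pos 0 v \<and> dd v = 1}"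
  by (rule inj_onI) (auto simp: mu_def dest: split_unique)

lemma wt_mu: "v \<in> PG m \<Longrightarrow> wt e (mu (v, w)) = wt (\<not> e) v + (if e then 1 else 0) + wt e w"
  by (simp add: mu_def wt_append PG_def)

lemma wt_mu_monom: "v \<in> PG m \<Longrightarrow> monom 1 (wt e (mu (v,w))) = cc e * monom 1 (wt (\<not>e) v) * monom 1 (wt e w)"
  by (simp add: wt_mu cc_def mult_monom add.commute add.left_commute)

lemma sum_mu: "(\<Sum>p\<in>PG m \<times> B. monom 1 (wt e (mu p))) = cc e * LG (\<not>e) m * (\<Sum>w\<in>B. monom 1 (wt e w))"
proof -
  have "(\<Sum>p\<in>PG m \<times> B. monom 1 (wt e (mu p))) = (\<Sum>v\<in>PG m. \<Sum>w\<in>B. monom 1 (wt e (mu (v, w))))"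
    by (simp add: sum.cartesian_product)
  also have "\<dots> = (\<Sum>v\<in>PG m. \<Sum>w\<in>B. cc e * monom 1 (wt (\<not>e) v) * monom 1 (wt e w))"
    by (rule sum.cong[OF refl], rule sum.cong[OF refl], erule wt_mu_monom)
  also have "\<dots> = (\<Sum>v\<in>PG m. cc e * monom 1 (wt (\<not>e) v)) * (\<Sum>w\<in>B. monom 1 (wt e w))"
    by (simp add: sum_product)
  also have "\<dots> = cc e * LG (\<not>e) m * (\<Sum>w\<in>B. monom 1 (wt e w))"
    by (simp add: LG_def sum_distrib_left)
  finally show ?thesis .
qed

lemma PF_Suc: "PF (Suc n) = mu ` (\<Union>m\<in>{..n}. PG m \<times> PF (n - m))"
proof
  show "mu ` (\<Union>m\<in>{..n}. PG m \<times> PF (n - m)) \<subseteq> PF (Suc n)"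
  proof clarsimp
    fix m v w assume "m \<le> n" "v \<in> PG m" "w \<in> PF (n - m)"
    then show "mu (v, w) \<in> PF (Suc n)"
      by (auto simp: PF_def PG_def mu_def pos_append dd_def intro: pos_mono)
  qed
next
  show "PF (Suc n) \<subseteq> mu ` (\<Union>m\<in>{..n}. PG m \<times> PF (n - m))"
  proof
    fix ss assume ss: "ss \<in> PF (Suc n)"
    then obtain b r where r: "ss = b # r" by (cases ss) (auto simp: PF_def)
    with ss have "b = False" by (cases b) (auto simp: PF_def dest: pos_nonneg)
    with ss r have pr: "pos (0 + 1) r" and cr: "count_list r False = 2*n+1" "count_list r True = Suc n"
      by (auto simp: PF_def)
    have "\<not> pos 0 r"
    proof
      assume "pos 0 r" then have "0 \<le> dd r" using pos_end by fastforce
      then show False using cr by (simp add: dd_def)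
    qed
    with split_first[OF _ pr] obtain v w where
      vw: "r = v @ True # w" "pos 0 v" "dd v = 1" "pos 0 w" by auto
    define m where "m = count_list v True"
    have cv: "count_list v False = 2*m+1" using vw(3) unfolding m_def dd_def by linarith
    have "m \<le> n" "count_list w True = n - m" "count_list w False = 2*(n-m)"
      using cr cv vw(1) unfolding m_def by auto
    then have "v \<in> PG m" "w \<in> PF (n - m)" using vw cv by (auto simp: PG_def PF_def m_def)
    then show "ss \<in> mu ` (\<Union>m\<in>{..n}. PG m \<times> PF (n - m))"
      using \<open>m \<le> n\<close> r \<open>b = False\<close> vw(1)
      by (intro image_eqI[of _ _ "(v, w)"]) (auto simp: mu_def)
  qed
qed

lemma LF_Suc: "LF e (Suc n) = (\<Sum>m\<le>n. cc e * LG (\<not> e) m * LF e (n - m))"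
proof -
  let ?U = "\<Union>m\<in>{..n}. PG m \<times> PF (n - m)"
  have inj: "inj_on mu ?U"
    by (rule inj_on_subset[OF mu_inj]) (auto dest: PG_sub)
  have "LF e (Suc n) = (\<Sum>p\<in>?U. monom 1 (wt e (mu p)))"
    unfolding LF_def PF_Suc by (simp add: sum.reindex[OF inj])
  also have "\<dots> = (\<Sum>m\<le>n. \<Sum>p\<in>PG m \<times> PF (n - m). monom 1 (wt e (mu p)))"
    by (rule sum.UNION_disjoint[OF _ _ disj_prod[OF PG_disj]]) (simp_all add: finite_PF finite_PG)
  also have "\<dots> = (\<Sum>m\<le>n. cc e * LG (\<not> e) m * LF e (n - m))"
    by (simp only: sum_mu LF_def)
  finally show ?thesis .
qed

definition nu :: "bool list \<Rightarrow> bool list" where "nu v = False # v"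

lemma PG_eq: "PG n = nu ` PF n \<union> mu ` (\<Union>m\<in>{..<n}. PG m \<times> PG (n - 1 - m))"
proof
  show "nu ` PF n \<union> mu ` (\<Union>m\<in>{..<n}. PG m \<times> PG (n - 1 - m)) \<subseteq> PG n"
  proof
    fix ss assume "ss \<in> nu ` PF n \<union> mu ` (\<Union>m\<in>{..<n}. PG m \<times> PG (n - 1 - m))"
    then show "ss \<in> PG n"
    proof
      assume "ss \<in> nu ` PF n" then show ?thesis
        using pos_mono[of 0 _ 1] by (auto simp: PF_def PG_def nu_def)
    next
      assume "ss \<in> mu ` (\<Union>m\<in>{..<n}. PG m \<times> PG (n - 1 - m))"
      then obtain m v w where "m < n" "v \<in> PG m" "w \<in> PG (n - 1 - m)" "ss = mu (v, w)" by auto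
      then show ?thesis using pos_mono[of 0 _ 1] by (auto simp: PF_def PG_def mu_def pos_append dd_def)
    qed
  qed
next
  show "PG n \<subseteq> nu ` PF n \<union> mu ` (\<Union>m\<in>{..<n}. PG m \<times> PG (n - 1 - m))"
  proof
    fix ss assume ss: "ss \<in> PG n"
    then obtain b r where r: "ss = b # r" by (cases ss) (auto simp: PG_def)
    with ss have "b = False" by (cases b) (auto simp: PG_def dest: pos_nonneg)
    with ss r have pr: "pos (0 + 1) r" and cr: "count_list r False = 2*n" "count_list r True = n"
      by (auto simp: PG_def)
    from split_first[OF order.refl pr] show "ss \<in> nu ` PF n \<union> mu ` (\<Union>m\<in>{..<n}. PG m \<times> PG (n - 1 - m))"
    proof
      assume "pos 0 r" then have "r \<in> PF n" using cr by (simp add: PF_def)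
      then show ?thesis using r \<open>b = False\<close> by (auto simp: nu_def)
    next
      assume "\<exists>v w. r = v @ True # w \<and> pos 0 v \<and> 0 + dd v = 1 \<and> pos 0 w"
      then obtain v w where vw: "r = v @ True # w" "pos 0 v" "dd v = 1" "pos 0 w" by auto
      define m where "m = count_list v True"
      have cv: "count_list v False = 2*m+1" using vw(3) unfolding m_def dd_def by linarith
      have "m < n" "count_list w True = n - 1 - m" "count_list w False = 2*(n-1-m)+1"
        using cr cv vw(1) unfolding m_def by auto
      then have "v \<in> PG m" "w \<in> PG (n - 1 - m)" using vw cv by (auto simp: PG_def m_def)
      then show ?thesis
        using \<open>m < n\<close> r \<open>b = False\<close> vw(1)
        by (intro UnI2 image_eqI[of _ _ "(v, w)"]) (auto simp: mu_def)
    qed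
  qed
qed

lemma LG_eq: "LG e n = LF (\<not> e) n + (if n = 0 then 0 else
   (\<Sum>m\<le>n - 1. cc e * LG (\<not> e) m * LG e (n - 1 - m)))"
proof -
  let ?U = "\<Union>m\<in>{..<n}. PG m \<times> PG (n - 1 - m)"
  have inj: "inj_on mu ?U"
    by (rule inj_on_subset[OF mu_inj]) (auto dest: PG_sub)
  have disj: "nu ` PF n \<inter> mu ` ?U = {}"
  proof -
    have "nu x \<noteq> mu (v, w)" if "x \<in> PF n" "v \<in> PG m" for x v w m
    proof
      assume "nu x = mu (v, w)"
      then have "x = v @ True # w" by (simp add: nu_def mu_def)
      with that show False by (auto simp: PF_def PG_def pos_append dd_def dest: pos_nonneg)
    qed
    note * = this
    show ?thesis
    proof (rule equals0I)
      fix y assume "y \<in> nu ` PF n \<inter> mu ` ?U"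
      then obtain x v w m where "x \<in> PF n" "v \<in> PG m" "y = nu x" "y = mu (v, w)"
        by blast
      then show False using *[of x v m w] by simp
    qed
  qed
  have "LG e n = (\<Sum>ss\<in>nu ` PF n. monom 1 (wt e ss)) + (\<Sum>ss\<in>mu ` ?U. monom 1 (wt e ss))"
    unfolding LG_def
    by (subst PG_eq, rule sum.union_disjoint[OF _ _ disj]) (simp_all add: finite_PF finite_PG)
  also have "(\<Sum>ss\<in>nu ` PF n. monom 1 (wt e ss)) = LF (\<not> e) n"
    by (subst sum.reindex) (auto simp: inj_on_def nu_def LF_def)
  also have "(\<Sum>ss\<in>mu ` ?U. monom 1 (wt e ss)) = (\<Sum>p\<in>?U. monom 1 (wt e (mu p)))"
    by (simp only: sum.reindex[OF inj] comp_def)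
  also have "\<dots> = (\<Sum>m<n. \<Sum>p\<in>PG m \<times> PG (n - 1 - m). monom 1 (wt e (mu p)))"
    by (rule sum.UNION_disjoint[OF _ _ disj_prod[OF PG_disj]]) (simp_all add: finite_PF finite_PG)
  also have "\<dots> = (\<Sum>m<n. cc e * LG (\<not> e) m * LG e (n - 1 - m))"
    by (simp only: sum_mu LG_def)
  also have "\<dots> = (if n = 0 then 0 else (\<Sum>m\<le>n - 1. cc e * LG (\<not> e) m * LG e (n - 1 - m)))"
    by (cases n) (simp_all add: lessThan_Suc_atMost)
  finally show ?thesis .
qed



lemma sum_list_plus1: "sum_list (map (\<lambda>c. f c + 1) ts) = sum_list (map f ts) + length ts"
  by (induction ts) auto

lemma nodes_pos: "num_nodes t \<ge> 1"
  by (cases t) auto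

lemma ne_Node: "num_edges (Node ts) = length ts + sum_list (map num_edges ts)"
proof -
  have ne1: "num_nodes c = num_edges c + 1" for c
    using nodes_pos[of c] by (simp add: num_edges_def)
  have "num_edges (Node ts) = sum_list (map num_nodes ts)" by (simp add: num_edges_def)
  also have "\<dots> = sum_list (map (\<lambda>c. num_edges c + 1) ts)" by (induction ts) (simp_all add: ne1)
  also have "\<dots> = length ts + sum_list (map num_edges ts)" using sum_list_plus1[of num_edges ts] by simp
  finally show ?thesis .
qed

lemma even_sum_list: "(\<And>x. x \<in> set xs \<Longrightarrow> even (f x :: nat)) \<Longrightarrow> even (sum_list (map f xs))"
  by (induction xs) auto

lemma even_tree_even: "even_tree t \<Longrightarrow> even (num_edges t) \<and> even (right_deg_sum t) \<and> even (degree_pt t)"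
proof (induction t)
  case (Node ts)
  then have ev: "even (length ts)" and ch: "\<And>c. c \<in> set ts \<Longrightarrow> even_tree c" by auto
  have IH: "\<And>c. c \<in> set ts \<Longrightarrow> even (num_edges c) \<and> even (right_deg_sum c) \<and> even (degree_pt c)"
    using Node.IH ch by blast
  have "even (sum_list (map num_edges ts))" by (rule even_sum_list) (simp add: IH)
  moreover have "even (sum_list (map right_deg_sum ts))" by (rule even_sum_list) (simp add: IH)
  moreover have "even (sum_list (map degree_pt (drop (length ts div 2) ts)))"
    by (rule even_sum_list) (simp add: IH in_set_dropD)
  ultimately show ?case using ev by (simp add: ne_Node degree_pt_def)
qed

lemma take_drop_sum: "sum_list (map f (take k xs)) + sum_list (map f (drop k xs)) = sum_list (map f xs)"
  by (metis append_take_drop_id map_append sum_list_append)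

definition E :: "nat \<Rightarrow> ptree set" where
  "E n = {t. even_tree t \<and> num_edges t = 2 * n}"

definition wA :: "ptree \<Rightarrow> nat" where "wA t = right_deg_sum t div 2"
definition wB :: "ptree \<Rightarrow> nat" where "wB t = (right_deg_sum t + degree_pt t) div 2"

definition TA :: "nat \<Rightarrow> int poly" where "TA n = (\<Sum>t\<in>E n. monom 1 (wA t))"
definition TB :: "nat \<Rightarrow> int poly" where "TB n = (\<Sum>t\<in>E n. monom 1 (wB t))"

definition phi :: "ptree \<times> ptree \<times> ptree \<Rightarrow> ptree" where
  "phi p = (case p of (l, r, T) \<Rightarrow>
     Node (l # take (length (children T) div 2) (children T) @ r # drop (length (children T) div 2) (children T)))"

definition D :: "nat \<Rightarrow> (ptree \<times> ptree \<times> ptree) set" where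
  "D n = (\<Union>i\<in>{..n}. \<Union>j\<in>{..n-i}. E i \<times> (E j \<times> E (n - i - j)))"

lemma phi_Node:
  assumes "length L = length R"
  shows "phi (l, r, Node (L @ R)) = Node (l # L @ r # R)"
  using assms by (simp add: phi_def)

lemma rds_phi:
  assumes "length L = length R"
  shows "right_deg_sum (Node (l # L @ r # R)) = right_deg_sum l + (right_deg_sum r + degree_pt r) + right_deg_sum (Node (L @ R))"
proof -
  have "drop (length (l # L @ r # R) div 2) (l # L @ r # R) = r # R" using assms by simp
  moreover have "drop (length (L @ R) div 2) (L @ R) = R" using assms by simp
  ultimately show ?thesis by simp
qed

lemma E_0: "E 0 = {Node []}"
proof -
  have "t = Node []" if "num_edges t = 0" for t
  proof (cases t)
    case (Node ts) with that show ?thesis by (auto simp: ne_Node)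
  qed
  then show ?thesis by (auto simp: E_def num_edges_def)
qed

lemma E_Suc: "E (Suc n) = phi ` D n"
proof
  show "phi ` D n \<subseteq> E (Suc n)"
  proof clarify
    fix l r T assume "(l, r, T) \<in> D n"
    then obtain i j where ij: "i \<le> n" "j \<le> n - i" "l \<in> E i" "r \<in> E j" "T \<in> E (n - i - j)"
      by (auto simp: D_def)
    obtain ts where T: "T = Node ts" by (cases T)
    have ev: "even (length ts)" using ij(5) T by (auto simp: E_def)
    define k where "k = length ts div 2"
    have "phi (l, r, T) = Node (l # take k ts @ r # drop k ts)" by (simp add: phi_def T k_def)
    moreover have "even_tree (Node (l # take k ts @ r # drop k ts))"
      using ij ev T by (auto simp: E_def k_def dest: in_set_takeD in_set_dropD)
    moreover have "num_edges (Node (l # take k ts @ r # drop k ts)) = 2 * Suc n"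
    proof -
      have "k \<le> length ts" by (simp add: k_def)
      then have "num_edges (Node (l # take k ts @ r # drop k ts)) = 2 + num_edges l + num_edges r + num_edges (Node ts)"
        by (simp add: ne_Node take_drop_sum min_absorb2)
      also have "\<dots> = 2 + num_edges l + num_edges r + num_edges T" using T by simp
      finally show ?thesis using ij by (simp add: E_def)
    qed
    ultimately show "phi (l, r, T) \<in> E (Suc n)" by (simp add: E_def)
  qed
next
  show "E (Suc n) \<subseteq> phi ` D n"
  proof
    fix t assume t: "t \<in> E (Suc n)"
    obtain ts where T: "t = Node ts" by (cases t)
    have ev: "even (length ts)" and ch: "\<And>c. c \<in> set ts \<Longrightarrow> even_tree c" and ed: "num_edges t = 2 * Suc n"
      using t T by (auto simp: E_def)
    have "ts \<noteq> []" using ed T by (auto simp: ne_Node)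
    from ev obtain k0 where k0: "length ts = 2 * k0" by (auto elim!: evenE)
    with \<open>ts \<noteq> []\<close> have "k0 \<ge> 1" by (cases k0) auto
    define k where "k = k0 - 1"
    have k: "length ts = 2 * k + 2" using k0 \<open>k0 \<ge> 1\<close> k_def by simp
    obtain l xs where lxs: "ts = l # xs" using \<open>ts \<noteq> []\<close> by (cases ts) auto
    define L where "L = take k xs"
    have "length (drop k xs) = k + 1" using k lxs by simp
    then obtain r R where dr: "drop k xs = r # R" by (cases "drop k xs") auto
    have lens: "length L = k" "length R = k"
      using k lxs dr \<open>length (drop k xs) = k + 1\<close> by (simp_all add: L_def)
    have ts: "ts = l # L @ r # R" using lxs dr L_def by (metis append_take_drop_id)
    define T' where "T' = Node (L @ R)"
    have tphi: "t = phi (l, r, T')" using T ts lens by (simp add: phi_Node T'_def)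
    have evs: "even_tree l" "even_tree r" "even_tree T'"
      using ch ev ts lens by (auto simp: T'_def)
    have ne: "num_edges t = 2 + num_edges l + num_edges r + num_edges T'"
      using T ts by (simp add: ne_Node T'_def)
    define i where "i = num_edges l div 2"
    define j where "j = num_edges r div 2"
    define q where "q = num_edges T' div 2"
    have eij: "num_edges l = 2 * i" "num_edges r = 2 * j" "num_edges T' = 2 * q"
      using even_tree_even[OF evs(1)] even_tree_even[OF evs(2)] even_tree_even[OF evs(3)]
      by (simp_all add: i_def j_def q_def)
    with ne ed have "i + j + q = n" by simp
    then have q: "q = n - i - j" "i \<le> n" "j \<le> n - i" by auto
    have "l \<in> E i" "r \<in> E j" "T' \<in> E (n - i - j)"
      using evs eij q by (simp_all add: E_def)
    then have "(l, r, T') \<in> D n"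
      unfolding D_def using q
      by (intro UN_I[of i] UN_I[of j]) (simp_all)
    then show "t \<in> phi ` D n" using tphi by blast
  qed
qed



lemma sum_prod_mult:
  assumes "\<And>a b. a \<in> A \<Longrightarrow> b \<in> B \<Longrightarrow> F (a, b) = f a * g b"
  shows "(\<Sum>p\<in>A \<times> B. F p) = sum f A * (sum g B :: 'a :: comm_semiring_1)"
proof -
  have "(\<Sum>p\<in>A \<times> B. F p) = (\<Sum>a\<in>A. \<Sum>b\<in>B. F (a, b))"
    by (simp add: sum.cartesian_product)
  also have "\<dots> = (\<Sum>a\<in>A. \<Sum>b\<in>B. f a * g b)"
    by (rule sum.cong[OF refl], rule sum.cong[OF refl], simp add: assms)
  also have "\<dots> = sum f A * sum g B" by (simp add: sum_product)
  finally show ?thesis .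
qed

lemma E_disj: "i \<noteq> j \<Longrightarrow> E i \<inter> E j = {}"
  by (auto simp: E_def)

lemma E_even: "t \<in> E i \<Longrightarrow> even_tree t"
  by (simp add: E_def)

definition DD :: "nat \<Rightarrow> (ptree \<times> ptree) set" where
  "DD m = (\<Union>j\<in>{..m}. E j \<times> E (m - j))"

lemma D_alt: "D n = (\<Union>i\<in>{..n}. E i \<times> DD (n - i))"
  unfolding D_def DD_def by (auto simp: diff_diff_add)

lemma finite_E: "finite (E n)"
proof (induction n rule: less_induct)
  case (less n)
  show ?case
  proof (cases n)
    case 0 then show ?thesis by (simp add: E_0)
  next
    case (Suc m)
    have "finite (D m)" unfolding D_def using less Suc by auto
    then show ?thesis using Suc E_Suc by simp
  qed
qed

lemma phi_inj:
  assumes "even (length (children T))" "even (length (children T'))" "phi (l, r, T) = phi (l', r', T')"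
  shows "l = l' \<and> r = r' \<and> T = T'"
proof -
  obtain ts where T: "T = Node ts" by (cases T)
  obtain ts' where T': "T' = Node ts'" by (cases T')
  define k where "k = length ts div 2"
  define k' where "k' = length ts' div 2"
  have lk: "length ts = 2 * k" "length ts' = 2 * k'" using assms T T' by (auto simp: k_def k'_def)
  have eq: "l # take k ts @ r # drop k ts = l' # take k' ts' @ r' # drop k' ts'"
    using assms(3) T T' by (simp add: phi_def k_def k'_def)
  then have "length (l # take k ts @ r # drop k ts) = length (l' # take k' ts' @ r' # drop k' ts')" by simp
  then have "k = k'" using lk by simp
  with eq have "l = l'" "take k ts @ r # drop k ts = take k ts' @ r' # drop k ts'" by auto
  moreover have "length (take k ts) = length (take k ts')" using lk \<open>k = k'\<close> by simp
  ultimately have "l = l'" "take k ts = take k ts'" "r = r'" "drop k ts = drop k ts'" by auto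
  then have "ts = ts'" by (metis append_take_drop_id)
  then show ?thesis using \<open>l = l'\<close> \<open>r = r'\<close> T T' by simp
qed

lemma phi_inj_on: "inj_on phi (D n)"
proof (rule inj_onI)
  fix x y assume "x \<in> D n" "y \<in> D n" "phi x = phi y"
  then obtain l r T l' r' T' where xy: "x = (l, r, T)" "y = (l', r', T')" "T \<in> E (n - 0 - 0) \<or> True"
    by (cases x, cases y) auto
  have "even_tree T" "even_tree T'" using \<open>x \<in> D n\<close> \<open>y \<in> D n\<close> xy by (auto simp: D_def E_def)
  then have "even (length (children T))" "even (length (children T'))"
    by (cases T, simp, cases T', simp)+
  then show "x = y" using phi_inj \<open>phi x = phi y\<close> xy by blast
qed

lemma phi_weights:
  assumes "even_tree l" "even_tree r" "even_tree T"
  shows "wA (phi (l, r, T)) = wA l + wB r + wA T" "wB (phi (l, r, T)) = wA l + wB r + wB T + 1"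
proof -
  obtain ts where T: "T = Node ts" by (cases T)
  define k where "k = length ts div 2"
  have lk: "length ts = 2 * k" using assms(3) T by (auto simp: k_def)
  define L where "L = take k ts"
  define R where "R = drop k ts"
  have len: "length L = length R" and ts: "ts = L @ R" using lk by (simp_all add: L_def R_def)
  have ph: "phi (l, r, T) = Node (l # L @ r # R)" using T ts len by (simp add: phi_Node)
  have rds: "right_deg_sum (phi (l, r, T)) = right_deg_sum l + (right_deg_sum r + degree_pt r) + right_deg_suM T"
    if "right_deg_suM = right_deg_sum" for right_deg_suM
    using rds_phi[OF len, of l r] ph T ts that by simp
  have dg: "degree_pt (phi (l, r, T)) = degree_pt T + 2" using ph T ts by (simp add: degree_pt_def)
  have ev: "even (right_deg_sum l)" "even (right_deg_sum r + degree_pt r)" "even (right_deg_sum T)" "even (degree_pt T)"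
    using even_tree_even[OF assms(1)] even_tree_even[OF assms(2)] even_tree_even[OF assms(3)] by auto
  show "wA (phi (l, r, T)) = wA l + wB r + wA T"
    using rds[OF refl] ev unfolding wA_def wB_def by (auto elim!: evenE)
  show "wB (phi (l, r, T)) = wA l + wB r + wB T + 1"
    using rds[OF refl] dg ev unfolding wA_def wB_def by (auto elim!: evenE)
qed

lemma E_Suc_sum:
  fixes F f g h :: "ptree \<Rightarrow> 'a :: comm_semiring_1"
  assumes "\<And>l r T. even_tree l \<Longrightarrow> even_tree r \<Longrightarrow> even_tree T \<Longrightarrow> F (phi (l, r, T)) = f l * (g r * h T)"
  shows "(\<Sum>t\<in>E (Suc n). F t) = (\<Sum>i\<le>n. sum f (E i) * (\<Sum>j\<le>n - i. sum g (E j) * sum h (E (n - i - j))))"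
proof -
  have "(\<Sum>t\<in>E (Suc n). F t) = (\<Sum>p\<in>D n. F (phi p))"
    by (simp only: E_Suc sum.reindex[OF phi_inj_on] comp_def)
  also have "\<dots> = (\<Sum>i\<le>n. \<Sum>p\<in>E i \<times> DD (n - i). F (phi p))"
    unfolding D_alt
    by (rule sum.UNION_disjoint) (simp_all add: finite_E DD_def, use E_disj in blast)
  also have "\<dots> = (\<Sum>i\<le>n. sum f (E i) * (\<Sum>q\<in>DD (n - i). g (fst q) * h (snd q)))"
  proof (rule sum.cong[OF refl], rule sum_prod_mult)
    fix i l q assume "l \<in> E i" "q \<in> DD (n - i)"
    then show "F (phi (l, q)) = f l * (g (fst q) * h (snd q))"
      by (cases q) (auto simp: DD_def E_def assms)
  qed
  also have "\<dots> = (\<Sum>i\<le>n. sum f (E i) * (\<Sum>j\<le>n - i. sum g (E j) * sum h (E (n - i - j))))"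
  proof (rule sum.cong[OF refl])
    fix i
    have "(\<Sum>q\<in>DD (n - i). g (fst q) * h (snd q)) = (\<Sum>j\<le>n - i. \<Sum>q\<in>E j \<times> E (n - i - j). g (fst q) * h (snd q))"
      unfolding DD_def
      by (rule sum.UNION_disjoint) (simp_all add: finite_E, use E_disj in blast)
    also have "\<dots> = (\<Sum>j\<le>n - i. sum g (E j) * sum h (E (n - i - j)))"
      by (rule sum.cong[OF refl], rule sum_prod_mult) simp
    finally show "sum f (E i) * (\<Sum>q\<in>DD (n - i). g (fst q) * h (snd q)) =
        sum f (E i) * (\<Sum>j\<le>n - i. sum g (E j) * sum h (E (n - i - j)))" by simp
  qed
  finally show ?thesis .
qed



lemma TA_Suc: "TA (Suc n) = (\<Sum>i\<le>n. TA i * (\<Sum>j\<le>n - i. TB j * TA (n - i - j)))"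
  unfolding TA_def TB_def
  by (rule E_Suc_sum) (simp add: phi_weights mult_monom add.assoc)

lemma TB_Suc: "TB (Suc n) = (\<Sum>i\<le>n. TA i * (\<Sum>j\<le>n - i. TB j * (cc True * TB (n - i - j))))"
proof -
  have "TB (Suc n) = (\<Sum>i\<le>n. TA i * (\<Sum>j\<le>n - i. TB j * (\<Sum>T\<in>E (n - i - j). monom 1 (wB T + 1))))"
    unfolding TA_def TB_def
    by (rule E_Suc_sum) (simp add: phi_weights mult_monom add.assoc)
  moreover have "(\<Sum>T\<in>E k. monom 1 (wB T + 1)) = cc True * TB k" for k
    by (simp add: TB_def cc_def sum_distrib_left mult_monom add.commute)
  ultimately show ?thesis by simp
qed

lemma TA_0: "TA 0 = 1" and TB_0: "TB 0 = 1"
  by (simp_all add: TA_def TB_def E_0 wA_def wB_def degree_pt_def)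

lemma LF_0: "LF e 0 = 1"
proof -
  have "PF 0 = {[]}"
  proof -
    have "ss = []" if "count_list ss False = 0" "count_list ss True = 0" for ss :: "bool list"
      using that len_count[of ss] by simp
    then show ?thesis by (auto simp: PF_def)
  qed
  then show ?thesis by (simp add: LF_def)
qed

definition fA :: "int poly fps" where "fA = Abs_fps TA"
definition fB :: "int poly fps" where "fB = Abs_fps TB"
definition fF :: "bool \<Rightarrow> int poly fps" where "fF e = Abs_fps (LF e)"
definition fG :: "bool \<Rightarrow> int poly fps" where "fG e = Abs_fps (LG e)"
definition CC :: "bool \<Rightarrow> int poly fps" where "CC e = fps_const (cc e)"

lemma const_mult_Abs: "fps_const (c :: int poly) * Abs_fps f = Abs_fps (\<lambda>n. c * f n)"
  by (rule fps_ext) (simp only: fps_mult_left_const_nth fps_nth_Abs_fps)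

lemma one_X_nth: "fps_nth (1 + fps_X * (S :: int poly fps)) n = (if n = 0 then 1 else fps_nth S (n - 1))"
  by simp
lemma add_X_nth: "fps_nth (F + fps_X * (S :: int poly fps)) n = fps_nth F n + (if n = 0 then 0 else fps_nth S (n - 1))"
  by simp

lemma fA_eq: "fA = 1 + fps_X * (fA * (fB * fA))"
proof (rule fps_ext)
  fix n show "fps_nth (fA) (n) = fps_nth ((1 + fps_X * (fA * (fB * fA)))) (n)"
    unfolding one_X_nth by (cases n) (simp_all add: fA_def fB_def TA_0 TA_Suc fps_mult_nth atLeast0AtMost const_mult_Abs)
qed

lemma fB_eq: "fB = 1 + fps_X * (fA * (fB * (CC True * fB)))"
proof (rule fps_ext)
  fix n show "fps_nth (fB) (n) = fps_nth ((1 + fps_X * (fA * (fB * (CC True * fB))))) (n)"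
    unfolding one_X_nth by (cases n) (simp_all add: fA_def fB_def CC_def TB_0 TB_Suc fps_mult_nth atLeast0AtMost const_mult_Abs)
qed

lemma fF_eq: "fF e = 1 + fps_X * (fG (\<not> e) * (CC e * fF e))"
proof (rule fps_ext)
  fix n show "fps_nth (fF e) n = fps_nth (1 + fps_X * (fG (\<not> e) * (CC e * fF e))) n"
  proof (cases n)
    case 0 then show ?thesis by (simp add: fF_def LF_0)
  next
    case (Suc k)
    have "fps_nth (1 + fps_X * (fG (\<not> e) * (CC e * fF e))) n = (\<Sum>i\<le>k. LG (\<not> e) i * (cc e * LF e (k - i)))"
      unfolding one_X_nth using Suc
      by (simp add: fF_def fG_def CC_def fps_mult_nth atLeast0AtMost const_mult_Abs)
    also have "\<dots> = LF e (Suc k)" by (simp add: LF_Suc mult_ac)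
    finally show ?thesis using Suc by (simp add: fF_def)
  qed
qed

lemma fG_eq: "fG e = fF (\<not> e) + fps_X * (fG (\<not> e) * (CC e * fG e))"
proof (rule fps_ext)
  fix n show "fps_nth (fG e) n = fps_nth (fF (\<not> e) + fps_X * (fG (\<not> e) * (CC e * fG e))) n"
  proof (cases n)
    case 0 then show ?thesis by (simp add: fF_def fG_def LG_eq[of e 0])
  next
    case (Suc k)
    have "fps_nth (fF (\<not> e) + fps_X * (fG (\<not> e) * (CC e * fG e))) n =
        LF (\<not> e) (Suc k) + (\<Sum>i\<le>k. LG (\<not> e) i * (cc e * LG e (k - i)))"
      unfolding add_X_nth using Suc
      by (simp add: fF_def fG_def CC_def fps_mult_nth atLeast0AtMost const_mult_Abs)
    also have "\<dots> = LG e (Suc k)" by (simp add: LG_eq[of e "Suc k"] mult_ac)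
    finally show ?thesis using Suc by (simp add: fG_def)
  qed
qed

lemma alg:
  fixes Fe Fo Ge Go X c :: "'a::comm_ring_1"
  assumes "Fe = 1 + X * (Go * (c * Fe))" "Ge = Fo + X * (Go * (c * Ge))"
  shows "Ge = Fe * Fo"
proof -
  define Dd where "Dd = 1 - X * (c * Go)"
  have "Fe - X * (Go * (c * Fe)) = 1" by (subst (1) assms(1)) simp
  then have h1: "Fe * Dd = 1" by (simp add: Dd_def algebra_simps)
  have "Ge - X * (Go * (c * Ge)) = Fo" by (subst (1) assms(2)) simp
  then have h2: "Ge * Dd = Fo" by (simp add: Dd_def algebra_simps)
  have "Ge = Ge * (Fe * Dd)" by (simp add: h1)
  also have "\<dots> = Fe * (Ge * Dd)" by (simp add: ac_simps)
  also have "\<dots> = Fe * Fo" by (simp add: h2)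
  finally show ?thesis .
qed

lemma cc_False: "CC False = 1"
  by (simp add: CC_def cc_def)

lemma lat_sys:
  "fF False = 1 + fps_X * (fF False * (fF True * fF False))"
  "fF True = 1 + fps_X * (fF False * (fF True * (CC True * fF True)))"
proof -
  have g1: "fG True = fF True * fF False"
    by (rule alg[OF fF_eq[of True, simplified] fG_eq[of True, simplified]])
  have g0: "fG False = fF False * fF True"
    by (rule alg[OF fF_eq[of False, simplified] fG_eq[of False, simplified]])
  have "fF False = 1 + fps_X * (fG True * (CC False * fF False))" using fF_eq[of False] by simp
  also have "\<dots> = 1 + fps_X * (fF False * (fF True * fF False))" by (simp add: g1 cc_False ac_simps)
  finally show "fF False = 1 + fps_X * (fF False * (fF True * fF False))" .
  have "fF True = 1 + fps_X * (fG False * (CC True * fF True))" using fF_eq[of True] by simp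
  also have "\<dots> = 1 + fps_X * (fF False * (fF True * (CC True * fF True)))" by (simp add: g0 ac_simps)
  finally show "fF True = 1 + fps_X * (fF False * (fF True * (CC True * fF True)))" .
qed

lemma mult_nth_agree:
  assumes "\<forall>k\<le>n. fps_nth f k = fps_nth f2 k" "\<forall>k\<le>n. fps_nth g k = fps_nth g2 k" "k \<le> n"
  shows "fps_nth (f * g) k = fps_nth (f2 * g2) k"
  unfolding fps_mult_nth using assms by (intro sum.cong) auto

lemma uniq:
  fixes A B A' B' c :: "'a::comm_ring_1 fps"
  assumes a: "A = 1 + fps_X * (A * (B * A))" and b: "B = 1 + fps_X * (A * (B * (c * B)))"
    and a': "A' = 1 + fps_X * (A' * (B' * A'))" and b': "B' = 1 + fps_X * (A' * (B' * (c * B')))"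
  shows "A = A' \<and> B = B'"
proof -
  have stepA: "fps_nth (A) (Suc n) = fps_nth ((A * (B * A))) (n)" for n by (subst (1) a) simp
  have stepB: "fps_nth (B) (Suc n) = fps_nth ((A * (B * (c * B)))) (n)" for n by (subst (1) b) simp
  have stepA': "fps_nth (A') (Suc n) = fps_nth ((A' * (B' * A'))) (n)" for n by (subst (1) a') simp
  have stepB': "fps_nth (B') (Suc n) = fps_nth ((A' * (B' * (c * B')))) (n)" for n by (subst (1) b') simp
  have A0: "fps_nth (A) (0) = 1" by (subst a) simp
  have B0: "fps_nth (B) (0) = 1" by (subst b) simp
  have A0': "fps_nth (A') (0) = 1" by (subst a') simp
  have B0': "fps_nth (B') (0) = 1" by (subst b') simp
  have "\<forall>k\<le>n. fps_nth (A) (k) = fps_nth (A') (k) \<and> fps_nth (B) (k) = fps_nth (B') (k)" for n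
  proof (induction n)
    case 0 then show ?case using A0 B0 A0' B0' by simp
  next
    case (Suc n)
    have hA: "\<forall>k\<le>n. fps_nth (A) (k) = fps_nth (A') (k)" and hB: "\<forall>k\<le>n. fps_nth (B) (k) = fps_nth (B') (k)" using Suc.IH by auto
    have hc: "\<forall>k\<le>n. fps_nth (c) (k) = fps_nth (c) (k)" by simp
    have p1: "\<forall>k\<le>n. fps_nth ((B * A)) (k) = fps_nth ((B' * A')) (k)" using mult_nth_agree[OF hB hA] by blast
    have p2: "\<forall>k\<le>n. fps_nth ((c * B)) (k) = fps_nth ((c * B')) (k)" using mult_nth_agree[OF hc hB] by blast
    have p3: "\<forall>k\<le>n. fps_nth ((B * (c * B))) (k) = fps_nth ((B' * (c * B'))) (k)" using mult_nth_agree[OF hB p2] by blast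
    have "fps_nth (A) (Suc n) = fps_nth (A') (Suc n)" unfolding stepA stepA' using mult_nth_agree[OF hA p1] by blast
    moreover have "fps_nth (B) (Suc n) = fps_nth (B') (Suc n)" unfolding stepB stepB' using mult_nth_agree[OF hA p3] by blast
    ultimately show ?case using Suc.IH by (auto simp: le_Suc_eq)
  qed
  then have "\<And>k. fps_nth (A) (k) = fps_nth (A') (k) \<and> fps_nth (B) (k) = fps_nth (B') (k)" by blast
  then show ?thesis by (auto intro: fps_ext)
qed

lemma TA_LF: "TA n = LF False n"
proof -
  have "fA = fF False" using uniq[OF fA_eq fB_eq lat_sys(1) lat_sys(2)] by blast
  then have "fps_nth (fA) (n) = fps_nth (fF False) (n)" by simp
  then show ?thesis by (simp add: fA_def fF_def)
qed

lemma rds_bound: "right_deg_sum t + degree_pt t \<le> num_edges t"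
proof (induction t)
  case (Node ts)
  have IH: "right_deg_sum c + degree_pt c \<le> num_edges c" if "c \<in> set ts" for c
    using Node.IH that by blast
  have s1: "sum_list (map degree_pt (drop k ts)) \<le> sum_list (map degree_pt ts)" for k
    using take_drop_sum[of degree_pt k ts] by linarith
  have s2: "sum_list (map right_deg_sum xs) + sum_list (map degree_pt xs) \<le> sum_list (map num_edges xs)"
    if "set xs \<subseteq> set ts" for xs
    using that
  proof (induction xs)
    case (Cons a xs)
    then have "right_deg_sum a + degree_pt a \<le> num_edges a" using IH by auto
    with Cons show ?case by auto
  qed simp
  show ?case
    using s1[of "length ts div 2"] s2[of ts] by (simp add: ne_Node degree_pt_def)
qed

lemma r_index_bound:
  assumes "t \<in> E n" "n \<ge> 1"
  shows "r_index t < n"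
proof -
  obtain ts where T: "t = Node ts" by (cases t)
  have ev: "even (length ts)" and ed: "num_edges t = 2 * n" using assms T by (auto simp: E_def)
  have "ts \<noteq> []" using ed T assms(2) by (auto simp: ne_Node)
  then have "length ts \<noteq> 0" by simp
  obtain b where "length ts = 2 * b" using ev by (auto elim!: evenE)
  with \<open>length ts \<noteq> 0\<close> have "length ts \<ge> 2" by simp
  then have "right_deg_sum t + 2 \<le> 2 * n" using rds_bound[of t] ed T by (simp add: degree_pt_def)
  then show ?thesis unfolding r_index_def by linarith
qed

lemma R_TA:
  assumes "n \<ge> 1"
  shows "R_poly n = TA n"
proof -
  have "TA n = (\<Sum>k\<in>{..<n}. \<Sum>t\<in>{t \<in> E n. r_index t = k}. monom 1 (r_index t))"
    unfolding TA_def wA_def[abs_def] r_index_def[symmetric]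
    by (rule sum.group[symmetric]) (use finite_E r_index_bound assms in auto)
  also have "\<dots> = (\<Sum>k\<in>{..<n}. monom (int (R_count n k)) k)"
  proof (rule sum.cong[OF refl])
    fix k
    have seteq: "{t \<in> E n. r_index t = k} = {t. even_tree t \<and> num_edges t = 2 * n \<and> r_index t = k}"
      by (auto simp: E_def)
    have "(\<Sum>t\<in>{t \<in> E n. r_index t = k}. monom 1 (r_index t)) = (\<Sum>t\<in>{t \<in> E n. r_index t = k}. monom 1 k)"
      by (rule sum.cong) auto
    also have "\<dots> = of_nat (card {t \<in> E n. r_index t = k}) * monom 1 k" by simp
    also have "\<dots> = monom (int (R_count n k)) k"
      by (simp add: R_count_def seteq of_nat_monom mult_monom)
    finally show "(\<Sum>t\<in>{t \<in> E n. r_index t = k}. monom 1 (r_index t)) = monom (int (R_count n k)) k" .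
  qed
  finally show ?thesis by (simp add: R_poly_def)
qed

lemma L_LF: "L_poly (2 * n) n = LF False n"
proof -
  have "lattice_paths (2 * n) n = PF n"
    unfolding lattice_paths_def PF_def using visited_pos[of 0 0] by auto
  then show ?thesis
    unfolding L_poly_def LF_def using odd_north_wt[of 0 0] by simp
qed

theorem mainTheorem2:
  fixes n :: nat
  assumes "n \<ge> 1"
  shows "R_poly n = L_poly (2 * n) n"
  using R_TA[OF assms] TA_LF L_LF by simp


end
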